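(* Let $\mathcal{G}\subseteq\{0,1\}^{\mathcal{X}}$, $\mathcal{H}\subseteq\{-1,+1\}^{\mathcal{X}}$, and $c^*\in\mathcal{C}(\mathcal{G},\mathcal{H})$. For $c\colon\mathcal{X}\to\{-1,+1\}$ let $(c\triangle c^* )(x)=\mathbf{1}[c(x)\neq c^*(x)]$. (i) For fixed $g\in\mathcal{G}$, the class $\mathcal{F}_g=\{x\mapsto g(x)(c\triangle c^* )(x) : c\in\mathcal{C}(\mathcal{G},\mathcal{H})\}$ satisfies $\mathcal{S}_{\mathcal{X}}(\mathcal{F}_g,k)\le \mathcal{S}_g(\mathcal{H},k)$ for every $k\ge1$. (ii) The class $\mathcal{F}=\{x\mapsto g(x)(c\triangle c^* )(x) : g\in\mathcal{G},\ c\in\mathcal{C}(\mathcal{G},\mathcal{H})\}$ satisfies $\mathcal{S}_{\mathcal{X}}(\mathcal{F},k)\le \mathcal{S}_{\mathcal{X}}(\mathcal{G},k)\cdot\sup_{g\in\mathcal{G}}\mathcal{S}_g(\mathcal{H},k)$ for every $k\ge 1$.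
   Context: A group $g \in \mathcal{G}$ is identified both with a function $g\colon \mathcal{X}\to\{0,1\}$ and with the subset $\{x : g(x)=1\}\subseteq \mathcal{X}$. Given $\mathcal{G}\subseteq\{0,1\}^{\mathcal{X}}$ and $\mathcal{H}\subseteq\{-1,+1\}^{\mathcal{X}}$ on the same domain $\mathcal{X}$, the set of group-realizable concepts $\mathcal{C}(\mathcal{G},\mathcal{H})\subseteq\{-1,+1\}^{\mathcal{X}}$ is the set of all functions $c\colon\mathcal{X}\to\{-1,+1\}$ such that for each $g\in\mathcal{G}$ there exists $h\in\mathcal{H}$ with $c(x)=h(x)$ for all $x\in g$. For a class $\mathcal{F}$ of functions on a domain $\mathcal{Z}$, the $k$-th shattering coefficient is $\mathcal{S}_{\mathcal{Z}}(\mathcal{F},k)=\sup_{z_1,\dots,z_k\in\mathcal{Z}}\left|\{(f(z_1),\dots,f(z_k)) : f\in\mathcal{F}\}\right|$; $\mathcal{S}_g(\mathcal{H},k)$ denotes this quantity with domain $\mathcal{Z}=g$ (points restricted to $g$). *)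

theory Defs
  imports Main
begin

text \<open>Groups are functions X \<rightarrow> {0,1} (values in int), hypotheses are functions
X \<rightarrow> {-1,+1} (values in int). A group g is identified with the set {x. g x = 1}.\<close>

definition group_set :: "('a \<Rightarrow> int) \<Rightarrow> 'a set" where
  "group_set g = {x. g x = 1}"

definition group_realizable :: "('a \<Rightarrow> int) set \<Rightarrow> ('a \<Rightarrow> int) set \<Rightarrow> ('a \<Rightarrow> int) set" where
  "group_realizable G H =
     {c. (\<forall>x. c x \<in> {-1, 1}) \<and> (\<forall>g\<in>G. \<exists>h\<in>H. \<forall>x\<in>group_set g. c x = h x)}"

definition shatter_coeff :: "'a set \<Rightarrow> ('a \<Rightarrow> 'b) set \<Rightarrow> nat \<Rightarrow> nat" where
  "shatter_coeff Z F k =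
     Sup {card ((\<lambda>f. map f zs) ` F) | zs. length zs = k \<and> set zs \<subseteq> Z}"

definition symdiff_ind :: "('a \<Rightarrow> int) \<Rightarrow> ('a \<Rightarrow> int) \<Rightarrow> 'a \<Rightarrow> int" where
  "symdiff_ind c cstar x = (if c x \<noteq> cstar x then 1 else 0)"

end

theory Submission
  imports Defs
begin

lemma pat_fin:
  assumes "\<forall>f\<in>F. \<forall>x. f x \<in> V" "finite V"
  shows "finite ((\<lambda>f. map f zs) ` F) \<and> card ((\<lambda>f. map f zs) ` F) \<le> card V ^ length zs"
proof -
  have sub: "(\<lambda>f. map f zs) ` F \<subseteq> {xs. set xs \<subseteq> V \<and> length xs = length zs}"
    using assms(1) by auto
  have fin: "finite {xs. set xs \<subseteq> V \<and> length xs = length zs}"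
    using finite_lists_length_eq[OF assms(2)] by simp
  show ?thesis
    using finite_subset[OF sub fin] card_mono[OF fin sub] card_lists_length_eq[OF assms(2)]
    by simp
qed

lemma sc_upper:
  assumes "\<forall>f\<in>F. \<forall>x. f x \<in> V" "finite V" "length zs = k" "set zs \<subseteq> Z"
  shows "card ((\<lambda>f. map f zs) ` F) \<le> shatter_coeff Z F k"
  unfolding shatter_coeff_def
proof (rule cSup_upper)
  show "card ((\<lambda>f. map f zs) ` F) \<in> {card ((\<lambda>f. map f zs) ` F) |zs. length zs = k \<and> set zs \<subseteq> Z}"
    using assms by blast
  show "bdd_above {card ((\<lambda>f. map f zs) ` F) |zs. length zs = k \<and> set zs \<subseteq> Z}"
    unfolding bdd_above_def
  proof (intro exI[of _ "card V ^ k"] ballI)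
    fix x assume "x \<in> {card ((\<lambda>f. map f zs) ` F) |zs. length zs = k \<and> set zs \<subseteq> Z}"
    then obtain ys where "x = card ((\<lambda>f. map f ys) ` F)" "length ys = k" by blast
    then show "x \<le> card V ^ k" using pat_fin[OF assms(1,2), of ys] by simp
  qed
qed

lemma sc_least:
  assumes "\<And>zs. length zs = k \<Longrightarrow> set zs \<subseteq> Z \<Longrightarrow> card ((\<lambda>f. map f zs) ` F) \<le> M"
    and "z \<in> Z"
  shows "shatter_coeff Z F k \<le> M"
  unfolding shatter_coeff_def
proof (rule cSup_least)
  show "{card ((\<lambda>f. map f zs) ` F) |zs. length zs = k \<and> set zs \<subseteq> Z} \<noteq> {}"
  proof -
    have "card ((\<lambda>f. map f (replicate k z)) ` F) \<in> {card ((\<lambda>f. map f zs) ` F) |zs. length zs = k \<and> set zs \<subseteq> Z}"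
      using assms(2) by (intro CollectI exI[of _ "replicate k z"]) auto
    then show ?thesis by blast
  qed
qed (use assms(1) in blast)

lemma A1:
  assumes gG: "g \<in> G" and g01: "\<forall>x. g x \<in> {0, 1}" and x0: "x0 \<in> group_set g"
    and Hpm: "\<forall>h\<in>H. \<forall>x. h x \<in> {-1, 1}"
  shows "card ((\<lambda>c. map (\<lambda>x. g x * symdiff_ind c cstar x) zs) ` group_realizable G H)
         \<le> shatter_coeff (group_set g) H (length zs)"
proof -
  define zs' where "zs' = map (\<lambda>z. if g z = 1 then z else x0) zs"
  define phi where "phi p = map (\<lambda>i. if g (zs!i) = 1 then (if p!i \<noteq> cstar (zs!i) then 1 else 0) else (0::int)) [0..<length zs]" for p :: "int list"
  have sub: "(\<lambda>c. map (\<lambda>x. g x * symdiff_ind c cstar x) zs) ` group_realizable G H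
      \<subseteq> phi ` ((\<lambda>h. map h zs') ` H)"
  proof
    fix p assume "p \<in> (\<lambda>c. map (\<lambda>x. g x * symdiff_ind c cstar x) zs) ` group_realizable G H"
    then obtain c where c: "c \<in> group_realizable G H" and p: "p = map (\<lambda>x. g x * symdiff_ind c cstar x) zs"
      by blast
    obtain h where h: "h \<in> H" "\<forall>x\<in>group_set g. c x = h x"
      using c gG unfolding group_realizable_def by blast
    have "p = phi (map h zs')"
    proof (rule nth_equalityI)
      show "length p = length (phi (map h zs'))" by (simp add: p phi_def)
      fix i assume "i < length p"
      hence i: "i < length zs" by (simp add: p)
      show "p ! i = phi (map h zs') ! i"
      proof (cases "g (zs!i) = 1")
        case True
        then show ?thesis using i h(2) by (simp add: p phi_def zs'_def symdiff_ind_def group_set_def)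
      next
        case False
        then have "g (zs!i) = 0" using g01 by auto
        then show ?thesis using i by (simp add: p phi_def zs'_def)
      qed
    qed
    then show "p \<in> phi ` ((\<lambda>h. map h zs') ` H)" using h(1) by blast
  qed
  have fin: "finite ((\<lambda>h. map h zs') ` H)" using pat_fin[OF Hpm, of zs'] by simp
  have "card ((\<lambda>c. map (\<lambda>x. g x * symdiff_ind c cstar x) zs) ` group_realizable G H)
      \<le> card (phi ` ((\<lambda>h. map h zs') ` H))"
    by (rule card_mono[OF _ sub]) (use fin in simp)
  also have "\<dots> \<le> card ((\<lambda>h. map h zs') ` H)" by (rule card_image_le[OF fin])
  also have "\<dots> \<le> shatter_coeff (group_set g) H (length zs)"
    by (rule sc_upper[where V="{-1,1}", OF Hpm]) (use x0 in \<open>auto simp: zs'_def group_set_def\<close>)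
  finally show ?thesis .
qed

lemma A2:
  assumes g01: "\<forall>x. g x \<in> {0, 1}" and e: "group_set g = {}"
  shows "card ((\<lambda>c. map (\<lambda>x. g x * symdiff_ind c cstar x) zs) ` R) \<le> 1"
proof -
  have "\<forall>x. g x = 0" using g01 e unfolding group_set_def by auto
  then have "(\<lambda>c. map (\<lambda>x. g x * symdiff_ind c cstar x) zs) ` R \<subseteq> {map (\<lambda>x. 0) zs}" by auto
  then show ?thesis using card_mono[of "{map (\<lambda>x. 0::int) zs}"] by fastforce
qed

lemma sc_bound:
  assumes "\<forall>f\<in>F. \<forall>x. f x \<in> V" "finite V"
  shows "shatter_coeff Z F k \<le> card V ^ k"
proof (cases "{card ((\<lambda>f. map f zs) ` F) |zs. length zs = k \<and> set zs \<subseteq> Z} = {}")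
  case True
  show ?thesis unfolding shatter_coeff_def True by simp
next
  case False
  show ?thesis unfolding shatter_coeff_def
  proof (rule cSup_least[OF False])
    fix x assume "x \<in> {card ((\<lambda>f. map f zs) ` F) |zs. length zs = k \<and> set zs \<subseteq> Z}"
    then obtain ys where "x = card ((\<lambda>f. map f ys) ` F)" "length ys = k" by blast
    then show "x \<le> card V ^ k" using pat_fin[OF assms(1,2), of ys] by simp
  qed
qed

lemma P_cong:
  assumes "map g zs = map g' zs"
  shows "(\<lambda>c. map (\<lambda>x. g x * symdiff_ind c cstar x) zs) ` R
       = (\<lambda>c. map (\<lambda>x. g' x * symdiff_ind c cstar x) zs) ` R"
proof -
  have "\<forall>x\<in>set zs. g x = g' x" using assms by (simp add: map_eq_conv)
  then show ?thesis by (intro image_cong refl map_cong) auto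
qed

theorem mainTheorem4:
  fixes G :: "('a \<Rightarrow> int) set" and H :: "('a \<Rightarrow> int) set" and cstar :: "'a \<Rightarrow> int"
  assumes G01: "\<forall>g\<in>G. \<forall>x. g x \<in> {0, 1}"
    and Hpm: "\<forall>h\<in>H. \<forall>x. h x \<in> {-1, 1}"
    and cstar: "cstar \<in> group_realizable G H"
  shows
    "(\<forall>g\<in>G. group_set g \<noteq> {} \<longrightarrow> (\<forall>k\<ge>1.
        shatter_coeff UNIV
          ((\<lambda>c. \<lambda>x. g x * symdiff_ind c cstar x) ` group_realizable G H) k
        \<le> shatter_coeff (group_set g) H k))
     \<and>
     ((G \<noteq> {} \<longrightarrow> (\<exists>g\<in>G. group_set g \<noteq> {})) \<longrightarrow> (\<forall>k\<ge>1.
        shatter_coeff UNIV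
          {(\<lambda>x. g x * symdiff_ind c cstar x) | g c. g \<in> G \<and> c \<in> group_realizable G H} k
        \<le> shatter_coeff UNIV G k * (SUP g\<in>G. shatter_coeff (group_set g) H k)))"
proof (intro conjI ballI impI allI)
  fix g and k :: nat assume gG: "g \<in> G" and ne: "group_set g \<noteq> {}" and k: "1 \<le> k"
  obtain x0 where x0: "x0 \<in> group_set g" using ne by blast
  show "shatter_coeff UNIV
          ((\<lambda>c. \<lambda>x. g x * symdiff_ind c cstar x) ` group_realizable G H) k
        \<le> shatter_coeff (group_set g) H k"
  proof (rule sc_least[where z=x0])
    fix zs :: "'a list" assume "length zs = k"
    then show "card ((\<lambda>f. map f zs) ` (\<lambda>c x. g x * symdiff_ind c cstar x) ` group_realizable G H)
         \<le> shatter_coeff (group_set g) H k"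
      using A1[where zs=zs and cstar=cstar, OF gG _ x0 Hpm] G01 gG by (simp add: image_image)
  qed simp
next
  fix k :: nat assume hyp: "G \<noteq> {} \<longrightarrow> (\<exists>g\<in>G. group_set g \<noteq> {})" and k: "1 \<le> k"
  define M where "M = (SUP g\<in>G. shatter_coeff (group_set g) H k)"
  define R where "R = group_realizable G H"
  define P where "P g zs = (\<lambda>c. map (\<lambda>x. g x * symdiff_ind c cstar x) zs) ` R" for g and zs :: "'a list"
  have bddM: "bdd_above ((\<lambda>g. shatter_coeff (group_set g) H k) ` G)"
    unfolding bdd_above_def using sc_bound[OF Hpm, of "group_set _" k] by auto
  have PM: "card (P g zs) \<le> M" if gG: "g \<in> G" and zs: "length zs = k" for g zs
  proof (cases "group_set g = {}")
    case False
    then obtain x0 where x0: "x0 \<in> group_set g" by blast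
    have "card (P g zs) \<le> shatter_coeff (group_set g) H k"
      using A1[where zs=zs and cstar=cstar, OF gG _ x0 Hpm] G01 gG zs by (simp add: P_def R_def)
    also have "\<dots> \<le> M" unfolding M_def by (rule cSup_upper[OF _ bddM]) (use gG in blast)
    finally show ?thesis .
  next
    case True
    have c1: "card (P g zs) \<le> 1" unfolding P_def using A2[OF _ True] G01 gG by blast
    obtain g1 where g1: "g1 \<in> G" "group_set g1 \<noteq> {}" using hyp gG by blast
    obtain x1 where x1: "x1 \<in> group_set g1" using g1 by blast
    obtain h where h: "h \<in> H" using cstar g1 unfolding group_realizable_def by blast
    have "1 \<le> card ((\<lambda>f. map f (replicate k x1)) ` H)"
    proof -
      have f: "finite ((\<lambda>f. map f (replicate k x1)) ` H)" using pat_fin[OF Hpm, of "replicate k x1"] by simp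
      have "(\<lambda>f. map f (replicate k x1)) ` H \<noteq> {}" using h by blast
      then show ?thesis using f by (simp add: Suc_le_eq card_gt_0_iff)
    qed
    also have "\<dots> \<le> shatter_coeff (group_set g1) H k"
      by (rule sc_upper[where V="{-1,1}", OF Hpm]) (use x1 in auto)
    also have "\<dots> \<le> M" unfolding M_def by (rule cSup_upper[OF _ bddM]) (use g1 in blast)
    finally show ?thesis using c1 by linarith
  qed
  show "shatter_coeff UNIV
          {(\<lambda>x. g x * symdiff_ind c cstar x) | g c. g \<in> G \<and> c \<in> group_realizable G H} k
        \<le> shatter_coeff UNIV G k * M"
  proof (rule sc_least[where z=undefined])
    fix zs :: "'a list" assume zs: "length zs = k"
    define Gp where "Gp = (\<lambda>g. map g zs) ` G"
    define gp where "gp p = (SOME g. g \<in> G \<and> map g zs = p)" for p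
    have gp: "gp p \<in> G \<and> map (gp p) zs = p" if "p \<in> Gp" for p
    proof -
      have "\<exists>g. g \<in> G \<and> map g zs = p" using that Gp_def by blast
      then show ?thesis unfolding gp_def by (rule someI_ex)
    qed
    have finGp: "finite Gp" using pat_fin[OF G01, of zs] by (simp add: Gp_def)
    have eq: "(\<lambda>f. map f zs) ` {(\<lambda>x. g x * symdiff_ind c cstar x) | g c. g \<in> G \<and> c \<in> group_realizable G H}
        = (\<Union>p\<in>Gp. P (gp p) zs)"
    proof
      show "(\<lambda>f. map f zs) ` {(\<lambda>x. g x * symdiff_ind c cstar x) | g c. g \<in> G \<and> c \<in> group_realizable G H}
        \<subseteq> (\<Union>p\<in>Gp. P (gp p) zs)"
      proof
        fix q assume "q \<in> (\<lambda>f. map f zs) ` {(\<lambda>x. g x * symdiff_ind c cstar x) | g c. g \<in> G \<and> c \<in> group_realizable G H}"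
        then obtain g c where gc: "g \<in> G" "c \<in> R" "q = map (\<lambda>x. g x * symdiff_ind c cstar x) zs"
          unfolding R_def by blast
        have p: "map g zs \<in> Gp" using gc Gp_def by blast
        have "P (gp (map g zs)) zs = P g zs" unfolding P_def by (rule P_cong) (use gp[OF p] in simp)
        moreover have "q \<in> P g zs" using gc unfolding P_def by blast
        ultimately show "q \<in> (\<Union>p\<in>Gp. P (gp p) zs)" using p by blast
      qed
      show "(\<Union>p\<in>Gp. P (gp p) zs) \<subseteq> (\<lambda>f. map f zs) ` {(\<lambda>x. g x * symdiff_ind c cstar x) | g c. g \<in> G \<and> c \<in> group_realizable G H}"
      proof
        fix q assume "q \<in> (\<Union>p\<in>Gp. P (gp p) zs)"
        then obtain p c where "p \<in> Gp" "c \<in> R" "q = map (\<lambda>x. gp p x * symdiff_ind c cstar x) zs"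
          unfolding P_def by blast
        then show "q \<in> (\<lambda>f. map f zs) ` {(\<lambda>x. g x * symdiff_ind c cstar x) | g c. g \<in> G \<and> c \<in> group_realizable G H}"
          using gp unfolding R_def by blast
      qed
    qed
    have "card (\<Union>p\<in>Gp. P (gp p) zs) \<le> (\<Sum>p\<in>Gp. card (P (gp p) zs))"
      by (rule card_UN_le[OF finGp])
    also have "\<dots> \<le> card Gp * M"
      using sum_bounded_above[of Gp "\<lambda>p. card (P (gp p) zs)" M] PM gp zs by simp
    also have "\<dots> \<le> shatter_coeff UNIV G k * M"
      by (rule mult_right_mono) (use sc_upper[where V="{0,1}", OF G01 _ zs] Gp_def in auto)
    finally show "card ((\<lambda>f. map f zs) ` {(\<lambda>x. g x * symdiff_ind c cstar x) | g c. g \<in> G \<and> c \<in> group_realizable G H})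
        \<le> shatter_coeff UNIV G k * M" using eq by simp
  qed simp
qed

end
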